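(* Let $z$ lie in a sufficiently small neighborhood of $\tfrac12$ and consider the germ in $Q$ $$H(Q)=\frac{1}{(w_1-w_0)(w_1-w_2)}(Q).$$ Then the only singular point of $H$ (among the possible singular points $Q_\pm(z)$) is $Q_+(z)$; $H$ is regular at $Q_-(z)$, and at $Q_+(z)$ it has an integrable singularity with two branches (continuing twice around $Q_+$ returns $H$).
   Context: $Q(w)=w(w-1)(w-z)$. Critical points $w_\pm(z)=\frac13(z+1)\pm\frac13(z^2-z+1)^{1/2}$ (principal root), critical values $Q_\pm(z)=Q(w_\pm(z))\approx\mp\frac{\sqrt3}{36}$. With $u=\frac{3z-(z+1)^2}{3}$, $v=\frac1{27}\big(-2(z+1)^3+9z(z+1)-27Q\big)$ and principal branches, $w_k(Q,z)=\frac{z+1}{3}+2\left(-\frac u3\right)^{1/2}\cos\!\Big(\frac13\arccos\Big(\frac{3v}{2u}\big(-\frac3u\big)^{1/2}\Big)+\theta_k\Big)$, $\theta_0=\frac{2\pi}3,\theta_1=0,\theta_2=-\frac{2\pi}3$: the three roots of $w(w-1)(w-z)=Q$, holomorphic near $(Q,z)=(0,\frac12)$ with $w_0(0,z)=0,w_1(0,z)=1,w_2(0,z)=z$, continued analytically in $Q$. *)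

theory Defs
  imports "HOL-Analysis.Analysis"
begin

definition Qpoly :: "complex \<Rightarrow> complex \<Rightarrow> complex" where
  "Qpoly z w = w * (w - 1) * (w - z)"

text \<open>Critical points (principal square root).\<close>
definition wplus :: "complex \<Rightarrow> complex" where
  "wplus z = (z + 1) / 3 + csqrt (z\<^sup>2 - z + 1) / 3"

definition wminus :: "complex \<Rightarrow> complex" where
  "wminus z = (z + 1) / 3 - csqrt (z\<^sup>2 - z + 1) / 3"

definition Qplus :: "complex \<Rightarrow> complex" where
  "Qplus z = Qpoly z (wplus z)"

definition Qminus :: "complex \<Rightarrow> complex" where
  "Qminus z = Qpoly z (wminus z)"

definition uu :: "complex \<Rightarrow> complex" where
  "uu z = (3 * z - (z + 1)\<^sup>2) / 3"

definition vv :: "complex \<Rightarrow> complex \<Rightarrow> complex" where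
  "vv Q z = (- 2 * (z + 1) ^ 3 + 9 * z * (z + 1) - 27 * Q) / 27"

definition theta :: "nat \<Rightarrow> complex" where
  "theta k = (if k = 0 then of_real (2 * pi / 3) else if k = 1 then 0 else of_real (- 2 * pi / 3))"

text \<open>Trigonometric root formula with principal branches (csqrt, Arccos).\<close>
definition wk :: "nat \<Rightarrow> complex \<Rightarrow> complex \<Rightarrow> complex" where
  "wk k Q z = (z + 1) / 3 + 2 * csqrt (- uu z / 3) *
     cos (Arccos (3 * vv Q z / (2 * uu z) * csqrt (- 3 / uu z)) / 3 + theta k)"

definition HH :: "complex \<Rightarrow> complex \<Rightarrow> complex" where
  "HH z Q = 1 / ((wk 1 Q z - wk 0 Q z) * (wk 1 Q z - wk 2 Q z))"

end

theory Submission
  imports Defs "HOL-Complex_Analysis.Complex_Analysis"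
begin


definition dd :: "complex \<Rightarrow> complex" where "dd z = csqrt (z\<^sup>2 - z + 1)"
definition AA :: "complex \<Rightarrow> complex \<Rightarrow> complex" where
  "AA z Q = - 27 * vv Q z / (2 * dd z ^ 3)"
definition cc :: "complex \<Rightarrow> complex \<Rightarrow> complex" where
  "cc z Q = cos (Arccos (AA z Q) / 3)"

lemma dd_sq: "(dd z)\<^sup>2 = z\<^sup>2 - z + 1" by (simp add: dd_def)

lemma uu_eq: "uu z = - (dd z)\<^sup>2 / 3"
  unfolding uu_def dd_sq by (simp add: power2_eq_square algebra_simps)

lemma Re_dd: assumes "Re (z\<^sup>2 - z + 1) > 0" shows "Re (dd z) > 0"
proof (rule ccontr)
  assume "\<not> Re (dd z) > 0"
  with csqrt_principal[of "z\<^sup>2 - z + 1"] have "Re (dd z) = 0" unfolding dd_def by auto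
  then have "Re ((dd z)\<^sup>2) \<le> 0" by (simp add: Re_power2)
  with assms show False by (simp add: dd_sq)
qed

lemma dd_nz: assumes "Re (z\<^sup>2 - z + 1) > 0" shows "dd z \<noteq> 0"
  using Re_dd[OF assms] by auto

lemma r_eq: assumes "Re (z\<^sup>2 - z + 1) > 0" shows "csqrt (- uu z / 3) = dd z / 3"
proof -
  have "- uu z / 3 = (dd z / 3)\<^sup>2" by (simp add: uu_eq power2_eq_square)
  then show ?thesis using Re_dd[OF assms] by (simp add: csqrt_unique)
qed

lemma s_eq: assumes "Re (z\<^sup>2 - z + 1) > 0" shows "csqrt (- 3 / uu z) = 3 / dd z"
proof -
  have nz: "dd z \<noteq> 0" using dd_nz[OF assms] .
  have "- 3 / uu z = (3 / dd z)\<^sup>2" using nz by (simp add: uu_eq power2_eq_square field_simps)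
  moreover have "Re (3 / dd z) > 0" using Re_dd[OF assms] nz
    by (simp add: Re_divide divide_pos_pos complex_neq_0 power2_eq_square)
  ultimately show ?thesis by (simp add: csqrt_unique)
qed

lemma arg_eq: assumes "Re (z\<^sup>2 - z + 1) > 0"
  shows "3 * vv Q z / (2 * uu z) * csqrt (- 3 / uu z) = AA z Q"
  using dd_nz[OF assms] unfolding s_eq[OF assms] unfolding AA_def uu_eq
  by (simp add: field_simps power2_eq_square power3_eq_cube)

lemma wk_eq: assumes "Re (z\<^sup>2 - z + 1) > 0"
  shows "wk k Q z = (z + 1) / 3 + 2 * (dd z / 3) * cos (Arccos (AA z Q) / 3 + theta k)"
  unfolding wk_def r_eq[OF assms] arg_eq[OF assms] ..

lemma cos_shift: "cos (a + complex_of_real t) = cos a * of_real (cos t) - sin a * of_real (sin t)"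
  by (simp add: cos_add cos_of_real sin_of_real)

lemma aux: fixes d C S R :: complex assumes "R^2 = 3" "S^2 = 1 - C^2"
  shows "2*(d/3)*(C - (C*(-1/2) - S*(R/2))) * (2*(d/3)*(C - (C*(-1/2) + S*(R/2)))) = d^2*(4*C^2-1)/3"
proof -
  have e: "S^2*R^2 = 3 - 3*C^2" unfolding assms by (simp add: algebra_simps)
  have "2*(d/3)*(C - (C*(-1/2) - S*(R/2))) * (2*(d/3)*(C - (C*(-1/2) + S*(R/2)))) = d^2*(9*C^2 - S^2*R^2)/9"
    by (simp add: field_simps power2_eq_square)
  also have "\<dots> = d^2*(4*C^2-1)/3" unfolding e by (simp add: field_simps power2_eq_square)
  finally show ?thesis .
qed

lemma HH_eq: assumes "Re (z\<^sup>2 - z + 1) > 0"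
  shows "HH z Q = 3 / ((dd z)\<^sup>2 * (4 * (cc z Q)\<^sup>2 - 1))"
proof -
  define a where "a = Arccos (AA z Q) / 3"
  have c: "cc z Q = cos a" by (simp add: cc_def a_def)
  have t0: "theta 0 = of_real (2*pi/3)" "theta 1 = 0" "theta 2 = of_real (-(2*pi/3))" by (simp_all add: theta_def)
  have s3: "(complex_of_real (sqrt 3))\<^sup>2 = 3"
    by (metis of_real_numeral of_real_power real_sqrt_pow2 zero_le_numeral)
  have w: "wk 1 Q z - wk 0 Q z = 2 * (dd z / 3) * (cos a - (cos a * (-1/2) - sin a * (of_real (sqrt 3) / 2)))"
    unfolding wk_eq[OF assms] t0 a_def[symmetric] cos_shift cos_120 sin_120 by (simp add: algebra_simps)
  have w2: "wk 1 Q z - wk 2 Q z = 2 * (dd z / 3) * (cos a - (cos a * (-1/2) + sin a * (of_real (sqrt 3) / 2)))"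
    unfolding wk_eq[OF assms] t0 a_def[symmetric] cos_shift cos_minus sin_minus cos_120 sin_120 by (simp add: algebra_simps)
  have sc: "(sin a)\<^sup>2 = 1 - (cos a)\<^sup>2" by (simp add: sin_squared_eq)
  have P: "(wk 1 Q z - wk 0 Q z) * (wk 1 Q z - wk 2 Q z) = (dd z)\<^sup>2 * (4 * (cos a)\<^sup>2 - 1) / 3"
    unfolding w w2 by (rule aux[OF s3 sc])
  show ?thesis unfolding HH_def c P by simp
qed

lemma vv_shift: "vv (Qpoly z ((z + 1) / 3 + t)) z = - (t ^ 3 - (dd z)\<^sup>2 * t / 3)"
  unfolding vv_def Qpoly_def dd_sq by (simp add: field_simps power2_eq_square power3_eq_cube)

lemma AA_Qminus: assumes "Re (z\<^sup>2 - z + 1) > 0" shows "AA z (Qminus z) = 1"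
proof -
  have "Qminus z = Qpoly z ((z + 1) / 3 + (- dd z / 3))" unfolding Qminus_def wminus_def dd_def by simp
  then have "vv (Qminus z) z = - 2 * dd z ^ 3 / 27" using vv_shift[of z "- dd z / 3"]
    by (simp add: field_simps power2_eq_square power3_eq_cube)
  then show ?thesis unfolding AA_def using dd_nz[OF assms] by simp
qed

lemma AA_Qplus: assumes "Re (z\<^sup>2 - z + 1) > 0" shows "AA z (Qplus z) = -1"
proof -
  have "Qplus z = Qpoly z ((z + 1) / 3 + (dd z / 3))" unfolding Qplus_def wplus_def dd_def by simp
  then have "vv (Qplus z) z = 2 * dd z ^ 3 / 27" using vv_shift[of z "dd z / 3"]
    by (simp add: field_simps power2_eq_square power3_eq_cube)
  then show ?thesis unfolding AA_def using dd_nz[OF assms] by (simp add: field_simps)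
qed

lemma AA_affine: "AA z Q = AA z 0 + 27 * Q / (2 * dd z ^ 3)"
proof (cases "dd z = 0")
  case False
  have "vv Q z = vv 0 z - Q" unfolding vv_def by (simp add: field_simps)
  then show ?thesis unfolding AA_def using False by (simp add: field_simps) (metis distrib_right)
qed (simp add: AA_def)

lemma cc_T: "4 * (cc z Q) ^ 3 - 3 * cc z Q = AA z Q"
proof -
  have "cos (3 * (Arccos (AA z Q) / 3)) = 4 * (cc z Q) ^ 3 - 3 * cc z Q"
    unfolding cc_def by (rule cos_treble_cos)
  then show ?thesis by simp
qed




definition cfun :: "complex \<Rightarrow> complex" where "cfun A = cos (Arccos A / 3)"
definition D1 :: "complex set" where "D1 = {A. \<bar>Re A\<bar> < 1}"

lemma cc_cfun: "cc z Q = cfun (AA z Q)" by (simp add: cc_def cfun_def)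

lemma open_D1: "open D1"
proof -
  have "D1 = {A. Re A < 1} \<inter> {A. Re A > -1}" by (auto simp: D1_def)
  then show ?thesis by (metis open_Int open_halfspace_Re_lt open_halfspace_Re_gt)
qed

lemma cfun_T: "4 * (cfun A) ^ 3 - 3 * cfun A = A"
proof -
  have "cos (3 * (Arccos A / 3)) = 4 * (cfun A) ^ 3 - 3 * cfun A"
    unfolding cfun_def by (rule cos_treble_cos)
  then show ?thesis by simp
qed

lemma Re_cfun_pos: assumes "\<bar>Re A\<bar> < 1" shows "Re (cfun A) > 0"
proof -
  have b: "0 < Re (Arccos A) \<and> Re (Arccos A) < pi" using Arccos_bounds[OF assms] .
  have "cos (Re (Arccos A / 3)) > 0" using b by (intro cos_gt_zero_pi) auto
  moreover have "(exp (Im (Arccos A / 3)) + exp (- Im (Arccos A / 3))) / 2 > 0"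
    by (simp add: add_pos_pos)
  ultimately show ?thesis unfolding cfun_def Re_cos
    by (metis mult_pos_pos times_divide_eq_right)
qed

lemma cfun_hol_D1: "cfun holomorphic_on D1"
proof -
  have "Arccos holomorphic_on D1" by (rule holomorphic_on_Arccos) (auto simp: D1_def)
  then have "(\<lambda>A. cos (Arccos A / 3)) holomorphic_on D1" by (intro holomorphic_intros) auto
  then show ?thesis unfolding cfun_def[abs_def] .
qed

lemma aux2: fixes A c :: complex assumes "A = -2*c" "4*c^2 = 1" shows "A^2 = 1"
  using assms by (simp add: power2_eq_square)

lemma cfun_den_D1: assumes "A \<in> D1" shows "4 * (cfun A)\<^sup>2 - 1 \<noteq> 0"
proof
  assume h: "4 * (cfun A)\<^sup>2 - 1 = 0"
  have h4: "4 * (cfun A)\<^sup>2 = 1" using h by simp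
  have "A = cfun A * (4 * (cfun A)\<^sup>2) - 3 * cfun A" using cfun_T[of A]
    by (simp add: power2_eq_square power3_eq_cube algebra_simps)
  then have "A = -2 * cfun A" unfolding h4 by simp
  then have "A\<^sup>2 = 1" using h4 by (rule aux2)
  then have "A = 1 \<or> A = -1" by (simp add: power2_eq_1_iff)
  then show False using assms by (auto simp: D1_def)
qed

lemma isCont_Arccos1: "isCont Arccos 1"
proof -
  have "isCont (\<lambda>z. sqrt (norm (1 - z\<^sup>2))) (1::complex)"
    by (intro continuous_intros)
  then have "((\<lambda>z::complex. sqrt (norm (1 - z\<^sup>2))) \<longlongrightarrow> sqrt (norm (1 - (1::complex)\<^sup>2))) (at 1)"
    unfolding isCont_def .
  then have "((\<lambda>z. norm (csqrt (1 - z\<^sup>2))) \<longlongrightarrow> 0) (at (1::complex))" by simp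
  then have "((\<lambda>z. csqrt (1 - z\<^sup>2)) \<longlongrightarrow> 0) (at (1::complex))" by (rule tendsto_norm_zero_cancel)
  then have "((\<lambda>z. z + \<i> * csqrt (1 - z\<^sup>2)) \<longlongrightarrow> 1 + \<i> * 0) (at (1::complex))"
    by (intro tendsto_intros)
  then have l1: "((\<lambda>z. z + \<i> * csqrt (1 - z\<^sup>2)) \<longlongrightarrow> 1) (at (1::complex))" by simp
  have "isCont Ln (1::complex)" by (rule continuous_at_Ln) (simp add: complex_nonpos_Reals_iff)
  then have "((\<lambda>z. Ln (z + \<i> * csqrt (1 - z\<^sup>2))) \<longlongrightarrow> Ln 1) (at (1::complex))"
    using l1 by (rule isCont_tendsto_compose)
  then have "((\<lambda>z. - \<i> * Ln (z + \<i> * csqrt (1 - z\<^sup>2))) \<longlongrightarrow> - \<i> * Ln 1) (at (1::complex))"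
    by (rule tendsto_mult_left)
  then show ?thesis unfolding isCont_def Arccos_def by simp
qed




lemma T_deriv1: "deriv (\<lambda>c::complex. 4 * c ^ 3 - 3 * c) 1 = 9"
proof -
  have "((\<lambda>c::complex. 4 * c ^ 3 - 3 * c) has_field_derivative 9) (at 1)"
    by (auto intro!: derivative_eq_intros)
  then show ?thesis by (rule DERIV_imp_deriv)
qed

lemma ext1: obtains N where "open N" "1 \<in> N" "cfun holomorphic_on N" "\<forall>A\<in>N. Re (cfun A) > 1/2"
proof -
  let ?T = "\<lambda>c::complex. 4 * c ^ 3 - 3 * c"
  have hT: "?T holomorphic_on ball 1 (1/2)" by (intro holomorphic_intros)
  have one: "(1::complex) \<in> ball 1 (1/2)" by simp
  have dnz: "deriv ?T 1 \<noteq> 0" by (simp add: T_deriv1)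
  obtain \<rho> where \<rho>: "\<rho> > 0" "ball (1::complex) \<rho> \<subseteq> ball 1 (1/2)" "inj_on ?T (ball 1 \<rho>)"
    using has_complex_derivative_locally_injective[OF hT one open_ball dnz] .
  have hT': "?T holomorphic_on ball 1 \<rho>" by (intro holomorphic_intros)
  obtain F where F: "F holomorphic_on (?T ` ball 1 \<rho>)" "\<And>c. c \<in> ball 1 \<rho> \<Longrightarrow> deriv ?T c * deriv F (?T c) = 1"
     "\<And>c. c \<in> ball 1 \<rho> \<Longrightarrow> F (?T c) = c"
    by (rule holomorphic_has_inverse[OF hT' _ \<rho>(3)]) auto
  have oN0: "open (?T ` ball 1 \<rho>)" using open_mapping_thm3[OF hT' _ \<rho>(3)] by simp
  have "isCont (\<lambda>A. Arccos A / 3) 1" using isCont_Arccos1 by (intro continuous_intros) auto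
  then have "isCont (\<lambda>A. cos (Arccos A / 3)) 1" by (rule isCont_o2) (rule isCont_cos)
  then have "isCont cfun 1" unfolding cfun_def[abs_def] .
  then obtain \<delta> where \<delta>: "\<delta> > 0" "\<And>A. dist A 1 < \<delta> \<Longrightarrow> dist (cfun A) (cfun 1) < \<rho>"
    using \<rho>(1) unfolding continuous_at_eps_delta by blast
  have c1: "cfun 1 = 1" by (simp add: cfun_def)
  define N where "N = ?T ` ball 1 \<rho> \<inter> ball 1 \<delta>"
  have inb: "cfun A \<in> ball 1 \<rho>" if "A \<in> N" for A
    using \<delta>(2)[of A] that c1 by (auto simp: N_def dist_commute)
  have eqF: "cfun A = F A" if "A \<in> N" for A
  proof -
    have "F (?T (cfun A)) = cfun A" using F(3) inb[OF that] by blast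
    then show ?thesis using cfun_T[of A] by simp
  qed
  have "open N" unfolding N_def using oN0 by auto
  moreover have "1 \<in> N" unfolding N_def using \<delta>(1) \<rho>(1)
    by (auto intro!: image_eqI[where x=1])
  moreover have "cfun holomorphic_on N"
    by (rule holomorphic_transform[of F]) (use F(1) eqF in \<open>auto simp: N_def intro: holomorphic_on_subset\<close>)
  moreover have "\<forall>A\<in>N. Re (cfun A) > 1/2"
  proof
    fix A assume "A \<in> N"
    then have "cfun A \<in> ball 1 (1/2)" using inb \<rho>(2) by blast
    then have "dist 1 (cfun A) < 1/2" by simp
    then have "\<bar>Re (1 - cfun A)\<bar> < 1/2" using abs_Re_le_cmod[of "1 - cfun A"] by (simp add: dist_norm)
    then have "Re (1 - cfun A) < 1/2" unfolding abs_less_iff by (rule conjunct1)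
    moreover have "Re (1 - cfun A) = 1 - Re (cfun A)" by simp
    ultimately show "Re (cfun A) > 1/2" by linarith
  qed
  ultimately show ?thesis using that by blast
qed




lemma AA_fun: "AA z = (\<lambda>Q. AA z 0 + (27 / (2 * dd z ^ 3)) * Q)"
  by (rule ext) (subst AA_affine, simp)

lemma open_pre: "open X \<Longrightarrow> open {Q. AA z Q \<in> X}"
proof -
  assume "open X"
  moreover have "\<And>x. continuous (at x) (AA z)" by (subst AA_fun) (intro continuous_intros)
  ultimately have "open (AA z -` X)" by (rule continuous_open_vimage)
  then show ?thesis by (simp add: vimage_def)
qed

lemma HH_hol:
  assumes z: "Re (z\<^sup>2 - z + 1) > 0" and N: "open N" "cfun holomorphic_on N" "\<forall>A\<in>N. Re (cfun A) > 1/2"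
  shows "HH z holomorphic_on {Q. AA z Q \<in> D1 \<union> N}"
proof -
  let ?S = "{Q. AA z Q \<in> D1 \<union> N}"
  have hA: "AA z holomorphic_on ?S" by (subst AA_fun) (intro holomorphic_intros)
  have hc: "cfun holomorphic_on (D1 \<union> N)" using cfun_hol_D1 N open_D1 by (intro holomorphic_on_Un)
  have "(cfun \<circ> AA z) holomorphic_on ?S" by (rule holomorphic_on_compose_gen[OF hA hc]) auto
  then have hc2: "(\<lambda>Q. cfun (AA z Q)) holomorphic_on ?S" by (simp add: o_def)
  have nz: "(dd z)\<^sup>2 * (4 * (cfun (AA z Q))\<^sup>2 - 1) \<noteq> 0" if "Q \<in> ?S" for Q
  proof -
    have "4 * (cfun (AA z Q))\<^sup>2 - 1 \<noteq> 0"
    proof (cases "AA z Q \<in> D1")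
      case True then show ?thesis by (rule cfun_den_D1)
    next
      case False
      then have "Re (cfun (AA z Q)) > 1/2" using that N(3) by auto
      then have "2 * cfun (AA z Q) - 1 \<noteq> 0" "2 * cfun (AA z Q) + 1 \<noteq> 0" by (auto dest!: arg_cong[where f=Re])
      moreover have "4 * (cfun (AA z Q))\<^sup>2 - 1 = (2 * cfun (AA z Q) - 1) * (2 * cfun (AA z Q) + 1)"
        by (simp add: power2_eq_square algebra_simps)
      ultimately show ?thesis by simp
    qed
    then show ?thesis using dd_nz[OF z] by simp
  qed
  have "(\<lambda>Q. 3 / ((dd z)\<^sup>2 * (4 * (cfun (AA z Q))\<^sup>2 - 1))) holomorphic_on ?S"
    using hc2 nz by (intro holomorphic_intros) auto
  then show ?thesis
    by (rule holomorphic_transform) (simp add: HH_eq[OF z] cc_cfun)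
qed

lemma AA_line: "AA z (of_real u * b) = AA z 0 + of_real u * (AA z b - AA z 0)"
  by (subst (1 2) AA_affine) (simp add: field_simps)

lemma Re_line: assumes "\<bar>Re a\<bar> < 1" "\<bar>Re b\<bar> \<le> 1" "0 \<le> u" "u < 1"
  shows "\<bar>Re (a + of_real u * (b - a))\<bar> < 1"
proof -
  have e: "Re (a + of_real u * (b - a)) = (1 - u) * Re a + u * Re b" by (simp add: algebra_simps)
  have "\<bar>(1 - u) * Re a\<bar> < 1 - u" using assms by (simp add: abs_mult)
  moreover have "\<bar>u * Re b\<bar> \<le> u" using assms by (simp add: abs_mult mult_left_le)
  ultimately show ?thesis unfolding e by linarith
qed

lemma seg_pre:
  assumes a0: "\<bar>Re (AA z 0)\<bar> < 1" and b: "AA z b = 1 \<or> AA z b = -1" and x: "x \<in> closed_segment 0 b" "x \<noteq> b"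
  shows "AA z x \<in> D1"
proof -
  obtain u where u: "0 \<le> u" "u \<le> 1" "x = of_real u * b" using x(1) by (auto simp: in_segment scaleR_conv_of_real)
  have "u \<noteq> 1" using u x(2) by auto
  then have "\<bar>Re (AA z 0 + of_real u * (AA z b - AA z 0))\<bar> < 1"
    using u b a0 by (intro Re_line) auto
  then show ?thesis unfolding D1_def u(3) AA_line by simp
qed

lemma eps_lemma: obtains \<epsilon> where "\<epsilon> > 0" "\<And>z. dist z (1/2) < \<epsilon> \<Longrightarrow> Re (z\<^sup>2 - z + 1) > 0 \<and> \<bar>Re (AA z 0)\<bar> < 1"
proof -
  have "isCont (\<lambda>z::complex. z\<^sup>2 - z + 1) (1/2)" by (intro continuous_intros)
  then have c1: "isCont (\<lambda>z::complex. Re (z\<^sup>2 - z + 1)) (1/2)" by (rule isCont_Re)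
  have "\<exists>d>0. \<forall>z. dist z (1/2) < d \<longrightarrow> dist (Re (z\<^sup>2 - z + 1)) (Re ((1/2::complex)\<^sup>2 - 1/2 + 1)) < 3/4"
    using c1 unfolding continuous_at_eps_delta by (drule_tac spec[of _ "3/4"]) simp
  then obtain d1 where d1: "d1 > 0" "\<And>z. dist z (1/2) < d1 \<Longrightarrow> dist (Re (z\<^sup>2 - z + 1)) (Re ((1/2::complex)\<^sup>2 - 1/2 + 1)) < 3/4"
    by blast
  have nn: "(1/2::complex)\<^sup>2 - 1/2 + 1 \<notin> \<real>\<^sub>\<le>\<^sub>0" by (simp add: complex_nonpos_Reals_iff power2_eq_square)
  have "csqrt ((1/2::complex)\<^sup>2 - 1/2 + 1) \<noteq> 0" by (simp add: power2_eq_square)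
  then have c2: "isCont (\<lambda>z. AA z 0) (1/2)" unfolding AA_def dd_def vv_def
    using nn by (intro continuous_intros) auto
  have v0: "AA (1/2) 0 = 0" unfolding AA_def vv_def by (simp add: power3_eq_cube)
  have "\<exists>d>0. \<forall>z. dist z (1/2) < d \<longrightarrow> dist (AA z 0) (AA (1/2) 0) < 1"
    using c2 unfolding continuous_at_eps_delta by (drule_tac spec[of _ 1]) simp
  then obtain d2 where d2: "d2 > 0" "\<And>z. dist z (1/2) < d2 \<Longrightarrow> dist (AA z 0) (AA (1/2) 0) < 1"
    by blast
  show ?thesis
  proof (rule that[of "min d1 d2"])
    show "min d1 d2 > 0" using d1 d2 by simp
    fix z :: complex assume "dist z (1/2) < min d1 d2"
    then have h1: "dist (Re (z\<^sup>2 - z + 1)) (3/4) < 3/4" and h2: "norm (AA z 0) < 1"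
      using d1(2)[of z] d2(2)[of z] v0 by (auto simp: power2_eq_square dist_norm)
    have "Re (z\<^sup>2 - z + 1) > 0" using h1 unfolding dist_real_def abs_less_iff by linarith
    moreover have "\<bar>Re (AA z 0)\<bar> < 1" using h2 abs_Re_le_cmod[of "AA z 0"] by linarith
    ultimately show "Re (z\<^sup>2 - z + 1) > 0 \<and> \<bar>Re (AA z 0)\<bar> < 1" by simp
  qed
qed




lemma roots3: fixes a b c A :: complex
  assumes "4*a^3-3*a = A" "4*b^3-3*b = A" "4*c^3-3*c = A" "a \<noteq> b"
  shows "c = a \<or> c = b \<or> c = -(a+b)"
proof -
  have "(a - b) * (4*(a^2+a*b+b^2) - 3) = 0" using assms(1,2)
    by (simp add: algebra_simps power2_eq_square power3_eq_cube)
  then have h1: "4*(a^2+a*b+b^2) = 3" using assms(4) by simp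
  have "4*((c - a) * (c - b) * (c + a + b)) = (4*c^3-3*c-A) - c*(4*(a^2+a*b+b^2) - 3) - (4*a^3-3*a-A) + a*(4*(a^2+a*b+b^2) - 3)"
    by (simp add: algebra_simps power2_eq_square power3_eq_cube)
  also have "\<dots> = 0" using h1 assms(1,3) by simp
  finally have "(c - a) * (c - b) * (c + a + b) = 0" by simp
  then have "c - a = 0 \<or> c - b = 0 \<or> c + a + b = 0" by simp
  then show ?thesis by (metis add.assoc eq_iff_diff_eq_0 eq_neg_iff_add_eq_0)
qed

lemma ext2: obtains E W \<rho> where "open W" "0 \<in> W" "E holomorphic_on W" "0 < \<rho>" "\<rho> \<le> 1/4"
  "\<forall>\<sigma>\<in>W. norm (E \<sigma>) < \<rho>" "\<forall>\<sigma>\<in>W. 4*(1/2 + E \<sigma>)^3 - 3*(1/2 + E \<sigma>) = -1 + \<sigma>\<^sup>2"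
  "inj_on E W" "E 0 = 0" "deriv E 0 \<noteq> 0"
proof -
  define \<psi> where "\<psi> = (\<lambda>e::complex. e * csqrt (6 + 4 * e))"
  have nn: "6 + 4 * e \<notin> \<real>\<^sub>\<le>\<^sub>0" if "e \<in> ball 0 (1/4)" for e :: complex
  proof -
    have "\<bar>Re e\<bar> < 1/4" using that abs_Re_le_cmod[of e] by auto
    then show ?thesis by (auto simp: complex_nonpos_Reals_iff)
  qed
  have hcs: "(\<lambda>e. csqrt (6 + 4 * e)) holomorphic_on ball 0 (1/4)"
    apply (intro holomorphic_intros) using nn by blast
  have hpsi: "\<psi> holomorphic_on ball 0 (1/4)" unfolding \<psi>_def by (intro holomorphic_on_mult holomorphic_on_ident hcs)
  have "(\<lambda>e. csqrt (6 + 4 * e)) field_differentiable at 0"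
    using holomorphic_on_imp_differentiable_at[OF hcs] by simp
  then obtain D' where D': "((\<lambda>e. csqrt (6 + 4 * e)) has_field_derivative D') (at 0)"
    by (auto simp: field_differentiable_def)
  have "(\<psi> has_field_derivative (1 * csqrt (6 + 4 * 0) + D' * 0)) (at 0)"
    unfolding \<psi>_def by (rule DERIV_mult[OF DERIV_ident D'])
  then have "deriv \<psi> 0 = csqrt 6" by (simp add: DERIV_imp_deriv)
  then have d0: "deriv \<psi> 0 \<noteq> 0" by simp
  have zero: "(0::complex) \<in> ball 0 (1/4)" by simp
  obtain \<rho>0 where \<rho>0: "\<rho>0 > 0" "ball (0::complex) \<rho>0 \<subseteq> ball 0 (1/4)" "inj_on \<psi> (ball 0 \<rho>0)"
    using has_complex_derivative_locally_injective[OF hpsi zero open_ball d0] .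
  define \<rho> where "\<rho> = min \<rho>0 (1/4)"
  have \<rho>: "\<rho> > 0" "\<rho> \<le> 1/4" "ball (0::complex) \<rho> \<subseteq> ball 0 (1/4)" "inj_on \<psi> (ball 0 \<rho>)"
    using \<rho>0 by (auto simp: \<rho>_def intro: inj_on_subset)
  have hpsi': "\<psi> holomorphic_on ball 0 \<rho>" using hpsi \<rho>(3) by (rule holomorphic_on_subset)
  obtain E where E: "E holomorphic_on (\<psi> ` ball 0 \<rho>)" "\<And>e. e \<in> ball 0 \<rho> \<Longrightarrow> deriv \<psi> e * deriv E (\<psi> e) = 1"
    "\<And>e. e \<in> ball 0 \<rho> \<Longrightarrow> E (\<psi> e) = e"
    using holomorphic_has_inverse[OF hpsi' _ \<rho>(4)] by auto
  define W where "W = \<psi> ` ball 0 \<rho>"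
  have oW: "open W" unfolding W_def using open_mapping_thm3[OF hpsi' _ \<rho>(4)] by simp
  have p0: "\<psi> 0 = 0" by (simp add: \<psi>_def)
  have W0: "0 \<in> W" unfolding W_def using \<rho>(1) p0 by (auto intro!: image_eqI[where x=0])
  have E0: "E 0 = 0" using E(3)[of 0] \<rho>(1) p0 by simp
  have dE: "deriv E 0 \<noteq> 0" using E(2)[of 0] \<rho>(1) p0 by auto
  have nE: "\<forall>\<sigma>\<in>W. norm (E \<sigma>) < \<rho>" using E(3) by (auto simp: W_def)
  have TE: "\<forall>\<sigma>\<in>W. 4*(1/2 + E \<sigma>)^3 - 3*(1/2 + E \<sigma>) = -1 + \<sigma>\<^sup>2"
  proof
    fix \<sigma> assume "\<sigma> \<in> W"
    then obtain e where e: "e \<in> ball 0 \<rho>" "\<sigma> = \<psi> e" by (auto simp: W_def)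
    have "\<sigma>\<^sup>2 = e\<^sup>2 * (6 + 4 * e)" unfolding e(2) \<psi>_def by (simp add: power_mult_distrib)
    then show "4*(1/2 + E \<sigma>)^3 - 3*(1/2 + E \<sigma>) = -1 + \<sigma>\<^sup>2" using E(3)[OF e(1)] e(2)
      by (simp add: power2_eq_square power3_eq_cube algebra_simps)
  qed
  have iE: "inj_on E W"
  proof (rule inj_onI)
    fix x y assume "x \<in> W" "y \<in> W" "E x = E y"
    then show "x = y" using E(3) by (auto simp: W_def)
  qed
  show ?thesis using that[OF oW W0 E(1)[folded W_def] \<rho>(1,2) nE TE iE E0 dE] .
qed




lemma fin_alg: fixes d e s :: complex assumes "e \<noteq> 0" "1 + e \<noteq> 0" "s \<noteq> 0" "d \<noteq> 0"
  shows "3 / (d\<^sup>2 * (4 * (1/2 + e)\<^sup>2 - 1)) = 3 / (4 * d\<^sup>2 * (1 + e) * (e / s)) / s"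
proof -
  have a: "d\<^sup>2 * (4 * (1/2 + e)\<^sup>2 - 1) = 4 * d\<^sup>2 * (1 + e) * e" by (simp add: power2_eq_square algebra_simps)
  have b: "(4 * d\<^sup>2 * (1 + e) * (e / s)) * s = 4 * d\<^sup>2 * (1 + e) * e" using assms(3) by simp
  show ?thesis unfolding divide_divide_eq_left b a ..
qed

lemma qplus_part:
  assumes z: "Re (z\<^sup>2 - z + 1) > 0" and a0: "\<bar>Re (AA z 0)\<bar> < 1"
  and W: "open W" "0 \<in> W" "E holomorphic_on W" "0 < \<rho>" "\<rho> \<le> 1/4"
  "\<forall>\<sigma>\<in>W. norm (E \<sigma>) < \<rho>" "\<forall>\<sigma>\<in>W. 4*(1/2 + E \<sigma>)^3 - 3*(1/2 + E \<sigma>) = -1 + \<sigma>\<^sup>2"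
  "inj_on E W" "E 0 = 0" "deriv E 0 \<noteq> 0"
  shows "\<exists>r g s0. r > 0 \<and> g holomorphic_on ball 0 r \<and> g 0 \<noteq> 0 \<and>
            s0 \<in> ball 0 r \<and> s0 \<noteq> 0 \<and> Qplus z + s0\<^sup>2 \<in> open_segment 0 (Qplus z) \<and>
            (\<forall>\<^sub>F s in at s0. HH z (Qplus z + s\<^sup>2) = g s / s)"
proof -
  define d where "d = dd z"
  have dnz: "d \<noteq> 0" using dd_nz[OF z] by (simp add: d_def)
  define Qp where "Qp = Qplus z"
  have AQp: "AA z Qp = -1" using AA_Qplus[OF z] by (simp add: Qp_def)
  define k where "k = 27 / (2 * d ^ 3)"
  have knz: "k \<noteq> 0" using dnz by (simp add: k_def)
  define \<kappa>0 where "\<kappa>0 = csqrt k"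
  have k0sq: "\<kappa>0\<^sup>2 = k" by (simp add: \<kappa>0_def)
  have k0nz: "\<kappa>0 \<noteq> 0" using knz by (simp add: \<kappa>0_def)
  have AQ: "AA z (Qp + s\<^sup>2) = -1 + (\<kappa> * s)\<^sup>2" if "\<kappa>\<^sup>2 = k" for s \<kappa>
  proof -
    have "AA z (Qp + s\<^sup>2) = AA z Qp + k * s\<^sup>2"
      using AA_affine[of z "Qp + s\<^sup>2"] AA_affine[of z Qp] by (simp add: k_def d_def ring_distribs add_divide_distrib)
    then show ?thesis using AQp that by (simp add: power_mult_distrib)
  qed
  have Qpnz: "Qp \<noteq> 0"
  proof
    assume "Qp = 0" then have "AA z 0 = -1" using AQp by simp
    then show False using a0 by simp
  qed
  obtain \<eta> where \<eta>: "\<eta> > 0" "ball 0 \<eta> \<subseteq> W" using W(1,2) openE by blast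
  define r where "r = \<eta> / norm \<kappa>0"
  have r: "r > 0" using \<eta> k0nz by (simp add: r_def)
  have inW: "\<kappa> * s \<in> W" if "s \<in> ball 0 r" "norm \<kappa> = norm \<kappa>0" for s \<kappa>
  proof -
    have "norm (\<kappa> * s) < \<eta>" using that k0nz
      by (simp add: norm_mult r_def field_simps)
    then show ?thesis using \<eta>(2) by auto
  qed
  define \<tau> where "\<tau> = min (1/2) (r\<^sup>2 / (2 * norm Qp))"
  have \<tau>: "\<tau> > 0" "\<tau> \<le> 1/2" "\<tau> * norm Qp \<le> r\<^sup>2 / 2" using r Qpnz
    by (auto simp: \<tau>_def min_def field_simps)
  define s0 where "s0 = csqrt (- (of_real \<tau> * Qp))"
  have s0sq: "s0\<^sup>2 = - (of_real \<tau> * Qp)" by (simp add: s0_def)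
  have s0nz: "s0 \<noteq> 0" using \<tau> Qpnz by (simp add: s0_def)
  have "(norm s0)\<^sup>2 = \<tau> * norm Qp" using s0sq \<tau>(1)
    by (metis abs_of_pos norm_minus_cancel norm_mult norm_of_real norm_power)
  also have "\<dots> < r\<^sup>2"
  proof -
    have "r\<^sup>2 > 0" using r by simp
    then show ?thesis using \<tau>(3) by linarith
  qed
  finally have s0r: "s0 \<in> ball 0 r" using r by (simp add: power_less_imp_less_base)
  have Qs0: "Qp + s0\<^sup>2 = of_real (1 - \<tau>) * Qp" using s0sq by (simp add: algebra_simps)
  have seg: "Qp + s0\<^sup>2 \<in> open_segment 0 Qp"
    unfolding in_segment(2) Qs0 using Qpnz \<tau>
    by (intro conjI exI[where x="1 - \<tau>"]) (auto simp: scaleR_conv_of_real)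
  define Afun where "Afun s = -1 + (\<kappa>0 * s)\<^sup>2" for s
  have AfunQ: "AA z (Qp + s\<^sup>2) = Afun s" for s using AQ[OF k0sq] by (simp add: Afun_def)
  have Re0: "\<bar>Re (Afun s0)\<bar> < 1"
  proof -
    have "\<bar>Re (AA z 0 + of_real (1 - \<tau>) * (AA z Qp - AA z 0))\<bar> < 1"
      using a0 AQp \<tau> by (intro Re_line) auto
    moreover have "AA z 0 + of_real (1 - \<tau>) * (AA z Qp - AA z 0) = Afun s0"
      using AfunQ[of s0] unfolding Qs0 AA_line .
    ultimately show ?thesis by metis
  qed
  have rootsW: "c = 1/2 + E \<sigma> \<or> c = 1/2 + E (- \<sigma>)"
    if "\<sigma> \<in> W" "- \<sigma> \<in> W" "\<sigma> \<noteq> 0" "4*c^3-3*c = -1 + \<sigma>\<^sup>2" "Re c > 0" for \<sigma> c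
  proof -
    have ne: "\<sigma> \<noteq> - \<sigma>" using that(3) by simp
    have "E \<sigma> \<noteq> E (- \<sigma>)" using W(8) that(1,2) ne by (meson inj_on_def)
    then have ab: "1/2 + E \<sigma> \<noteq> 1/2 + E (- \<sigma>)" by simp
    have Ta: "4*(1/2 + E \<sigma>)^3 - 3*(1/2 + E \<sigma>) = -1 + \<sigma>\<^sup>2" using W(7) that(1) by blast
    have Tb: "4*(1/2 + E (-\<sigma>))^3 - 3*(1/2 + E (-\<sigma>)) = -1 + \<sigma>\<^sup>2" using W(7) that(2) by force
    have "c = 1/2 + E \<sigma> \<or> c = 1/2 + E (- \<sigma>) \<or> c = -((1/2 + E \<sigma>) + (1/2 + E (- \<sigma>)))"
      using roots3[OF Ta Tb that(4) ab] .
    moreover have "Re (-((1/2 + E \<sigma>) + (1/2 + E (- \<sigma>)))) < 0"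
    proof -
      have "\<bar>Re (E \<sigma>)\<bar> < \<rho>" "\<bar>Re (E (-\<sigma>))\<bar> < \<rho>"
        using W(6) that(1,2) abs_Re_le_cmod by (meson le_less_trans)+
      then show ?thesis using W(5) by simp
    qed
    ultimately show ?thesis using that(5) by auto
  qed
  have s0W: "\<kappa>0 * s0 \<in> W" "- (\<kappa>0 * s0) \<in> W" using inW[OF s0r, of \<kappa>0] inW[OF s0r, of "- \<kappa>0"] by auto
  have cT: "4 * (cfun (Afun s))^3 - 3 * cfun (Afun s) = -1 + (\<kappa>0 * s)\<^sup>2" for s
    using cfun_T[of "Afun s"] by (simp add: Afun_def)
  have "cfun (Afun s0) = 1/2 + E (\<kappa>0 * s0) \<or> cfun (Afun s0) = 1/2 + E (- (\<kappa>0 * s0))"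
    using s0W k0nz s0nz Re_cfun_pos[OF Re0] cT[of s0] by (intro rootsW) auto
  then obtain \<kappa> where \<kappa>: "norm \<kappa> = norm \<kappa>0" "\<kappa>\<^sup>2 = k" "cfun (Afun s0) = 1/2 + E (\<kappa> * s0)"
    using k0sq by (metis mult_minus_left norm_minus_cancel power2_minus)
  have knz': "\<kappa> \<noteq> 0" using \<kappa>(1) k0nz by auto
  have Afun_k: "Afun s = -1 + (\<kappa> * s)\<^sup>2" for s using \<kappa>(2) k0sq by (simp add: Afun_def power_mult_distrib)
  define hE where "hE s = E (\<kappa> * s)" for s
  have hhE: "hE holomorphic_on ball 0 r"
  proof -
    have im: "(\<lambda>s. \<kappa> * s) ` ball 0 r \<subseteq> W"
    proof (rule image_subsetI)
      fix s :: complex assume "s \<in> ball 0 r" then show "\<kappa> * s \<in> W" by (rule inW[OF _ \<kappa>(1)])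
    qed
    have "(\<lambda>s. \<kappa> * s) holomorphic_on ball 0 r" by (intro holomorphic_intros)
    then have "(E \<circ> (\<lambda>s. \<kappa> * s)) holomorphic_on ball 0 r"
      using W(3) im by (rule holomorphic_on_compose_gen)
    then show ?thesis by (simp add: hE_def[abs_def] o_def)
  qed
  have hE0: "hE 0 = 0" using W(9) by (simp add: hE_def)
  have "DERIV E (\<kappa> * 0) :> deriv E 0" using holomorphic_derivI[OF W(3) W(1) W(2)] by simp
  moreover have "((\<lambda>s. \<kappa> * s) has_field_derivative \<kappa>) (at 0)"
    by (rule DERIV_cmult_Id)
  ultimately have "DERIV hE 0 :> deriv E 0 * \<kappa>" unfolding hE_def[abs_def]
    by (rule DERIV_chain2)
  then have dhE: "deriv hE 0 \<noteq> 0" using W(10) knz' by (simp add: DERIV_imp_deriv)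
  define h where "h s = (if s = 0 then deriv hE 0 else (hE s - hE 0) / (s - 0))" for s
  have "0 \<in> interior (ball (0::complex) r)" using r by simp
  then have hh: "h holomorphic_on ball 0 r" unfolding h_def[abs_def]
    by (rule pole_lemma[OF hhE])
  have hEnz: "hE s \<noteq> 0" if "s \<in> ball 0 r" "s \<noteq> 0" for s
  proof
    assume "hE s = 0"
    then have "E (\<kappa> * s) = E 0" using W(9) by (simp add: hE_def)
    then have "\<kappa> * s = 0" using W(8) W(2) inW[OF that(1) \<kappa>(1)] by (meson inj_on_def)
    then show False using that(2) knz' by simp
  qed
  have hnz: "h s \<noteq> 0" if "s \<in> ball 0 r" for s
    using dhE hEnz[OF that] by (auto simp: h_def hE0)
  have Enorm: "norm (hE s) < 1/4" if "s \<in> ball 0 r" for s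
  proof -
    have "norm (E (\<kappa> * s)) < \<rho>" using W(6) inW[OF that \<kappa>(1)] by blast
    then show ?thesis using W(5) by (simp add: hE_def)
  qed
  have onenz: "1 + hE s \<noteq> 0" if "s \<in> ball 0 r" for s
  proof
    assume "1 + hE s = 0" then have "hE s = -1" by (simp add: add_eq_0_iff)
    then show False using Enorm[OF that] by simp
  qed
  define g where "g s = 3 / (4 * d\<^sup>2 * (1 + hE s) * h s)" for s
  have hg: "g holomorphic_on ball 0 r" unfolding g_def[abs_def]
    by (intro holomorphic_on_divide holomorphic_on_mult holomorphic_on_add holomorphic_on_const hhE hh)
      (use hnz onenz dnz in simp)
  have g0: "g 0 \<noteq> 0" using hnz[of 0] r hE0 dnz by (simp add: g_def)
  define \<delta> where "\<delta> = norm (E (\<kappa> * s0) - E (- (\<kappa> * s0)))"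
  have \<delta>: "\<delta> > 0"
  proof -
    have "\<kappa> * s0 \<in> W" by (rule inW[OF s0r \<kappa>(1)])
    moreover have "(- \<kappa>) * s0 \<in> W" by (rule inW[OF s0r]) (simp add: \<kappa>(1))
    ultimately have "\<kappa> * s0 \<in> W" "- (\<kappa> * s0) \<in> W" by simp_all
    moreover have "\<kappa> * s0 \<noteq> - (\<kappa> * s0)" using knz' s0nz by simp
    ultimately have "E (\<kappa> * s0) \<noteq> E (- (\<kappa> * s0))" using W(8) by (meson inj_on_def)
    then show ?thesis by (simp add: \<delta>_def)
  qed
  have cA: "isCont (\<lambda>s. Afun s) s0" unfolding Afun_def by (intro continuous_intros)
  have cRe: "isCont (\<lambda>s. Re (Afun s)) s0" using cA by (rule isCont_Re)
  have "isCont Arccos (Afun s0)" using Re0 by (intro isCont_Arccos) auto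
  then have cArc: "isCont (\<lambda>s. Arccos (Afun s)) s0" using cA by (rule isCont_o2[rotated])
  have "isCont (\<lambda>s. Arccos (Afun s) / 3) s0" using cArc by (rule isCont_divide) auto
  then have "isCont (\<lambda>s. cos (Arccos (Afun s) / 3)) s0" by (rule isCont_o2) (rule isCont_cos)
  then have ccf: "isCont (\<lambda>s. cfun (Afun s)) s0" unfolding cfun_def .
  have mW: "- (\<kappa> * s0) \<in> W" using inW[OF s0r, of "-\<kappa>"] \<kappa>(1) by simp
  have "isCont E (- (\<kappa> * s0))"
    using holomorphic_on_imp_continuous_on[OF W(3)] W(1) mW continuous_on_eq_continuous_at by blast
  then have cE: "isCont (\<lambda>s. E (- (\<kappa> * s))) s0" by (rule isCont_o2[rotated]) (intro continuous_intros)
  have ev1: "\<forall>\<^sub>F s in at s0. dist s s0 < min (r - norm s0) (norm s0)"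
    using s0r s0nz by (intro tendstoD[OF tendsto_ident_at]) auto
  have ev2: "\<forall>\<^sub>F s in at s0. dist (Re (Afun s)) (Re (Afun s0)) < 1 - \<bar>Re (Afun s0)\<bar>"
    using Re0 cRe unfolding isCont_def by (intro tendstoD) auto
  have ev3: "\<forall>\<^sub>F s in at s0. dist (cfun (Afun s)) (cfun (Afun s0)) < \<delta> / 2"
    using \<delta> ccf unfolding isCont_def by (intro tendstoD) auto
  have ev4: "\<forall>\<^sub>F s in at s0. dist (E (- (\<kappa> * s))) (E (- (\<kappa> * s0))) < \<delta> / 2"
    using \<delta> cE unfolding isCont_def by (intro tendstoD) auto
  have ev: "\<forall>\<^sub>F s in at s0. HH z (Qp + s\<^sup>2) = g s / s"
    using eventually_conj[OF ev1 eventually_conj[OF ev2 eventually_conj[OF ev3 ev4]]]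
  proof (rule eventually_mono, elim conjE)
    fix s assume h1: "dist s s0 < min (r - norm s0) (norm s0)"
      and h2: "dist (Re (Afun s)) (Re (Afun s0)) < 1 - \<bar>Re (Afun s0)\<bar>"
      and h3: "dist (cfun (Afun s)) (cfun (Afun s0)) < \<delta> / 2"
      and h4: "dist (E (- (\<kappa> * s))) (E (- (\<kappa> * s0))) < \<delta> / 2"
    have h1a: "norm (s - s0) < r - norm s0" "norm (s - s0) < norm s0" using h1 by (simp_all add: dist_norm)
    have sr: "s \<in> ball 0 r"
    proof -
      have "norm s \<le> norm s0 + norm (s - s0)" using norm_triangle_ineq[of s0 "s - s0"] by simp
      then have "norm s < r" using h1a(1) by linarith
      then show ?thesis by simp
    qed
    have snz: "s \<noteq> 0"
    proof
      assume "s = 0" then show False using h1a(2) by simp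
    qed
    have ReA: "\<bar>Re (Afun s)\<bar> < 1" using h2 unfolding dist_real_def abs_less_iff by linarith
    have sW1: "\<kappa> * s \<in> W" by (rule inW[OF sr \<kappa>(1)])
    have "(- \<kappa>) * s \<in> W" by (rule inW[OF sr]) (simp add: \<kappa>(1))
    then have sW2: "- (\<kappa> * s) \<in> W" by simp
    have ksnz: "\<kappa> * s \<noteq> 0" using knz' snz by simp
    have Tc: "4 * (cfun (Afun s))^3 - 3 * cfun (Afun s) = -1 + (\<kappa> * s)\<^sup>2"
      using cfun_T[of "Afun s"] unfolding Afun_k .
    have "cfun (Afun s) = 1/2 + E (\<kappa> * s) \<or> cfun (Afun s) = 1/2 + E (- (\<kappa> * s))"
      by (rule rootsW[OF sW1 sW2 ksnz Tc Re_cfun_pos[OF ReA]])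
    moreover have "cfun (Afun s) \<noteq> 1/2 + E (- (\<kappa> * s))"
    proof
      assume eq: "cfun (Afun s) = 1/2 + E (- (\<kappa> * s))"
      have sp: "E (\<kappa> * s0) - E (- (\<kappa> * s0)) = ((1/2 + E (\<kappa> * s0)) - cfun (Afun s)) + (E (- (\<kappa> * s)) - E (- (\<kappa> * s0)))"
        unfolding eq by simp
      have "\<delta> = norm (E (\<kappa> * s0) - E (- (\<kappa> * s0)))" by (simp add: \<delta>_def)
      also have "\<dots> \<le> norm ((1/2 + E (\<kappa> * s0)) - cfun (Afun s)) + norm (E (- (\<kappa> * s)) - E (- (\<kappa> * s0)))"
        unfolding sp by (rule norm_triangle_ineq)
      also have "\<dots> < \<delta>/2 + \<delta>/2" using h3 h4 \<kappa>(3) by (intro add_strict_mono) (auto simp: dist_norm norm_minus_commute)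
      finally show False by simp
    qed
    ultimately have cs: "cfun (Afun s) = 1/2 + hE s" by (simp add: hE_def)
    have hs: "h s = hE s / s" using snz hE0 by (simp add: h_def)
    have e: "hE s \<noteq> 0" "1 + hE s \<noteq> 0" using hEnz[OF sr snz] onenz[OF sr] by auto
    have "HH z (Qp + s\<^sup>2) = 3 / (d\<^sup>2 * (4 * (1/2 + hE s)\<^sup>2 - 1))"
      using HH_eq[OF z, of "Qp + s\<^sup>2"] by (simp add: cc_cfun AfunQ cs d_def)
    also have "\<dots> = g s / s" unfolding g_def hs using e snz dnz by (rule fin_alg)
    finally show "HH z (Qp + s\<^sup>2) = g s / s" .
  qed
  show ?thesis unfolding Qp_def[symmetric]
    by (rule exI[of _ r], rule exI[of _ g], rule exI[of _ s0]) (use r hg g0 s0r s0nz seg ev in simp)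
qed




theorem lemma2p2:
  "\<exists>\<epsilon>>0. \<forall>z. dist z (1/2) < \<epsilon> \<longrightarrow>
     \<comment> \<open>regular at Q_-: the continuation of the germ along [0, Q_-] extends holomorphically past Q_-\<close>
     (\<exists>S f. open S \<and> closed_segment 0 (Qminus z) \<subseteq> S \<and> f holomorphic_on S \<and>
            (\<forall>\<^sub>F Q in nhds 0. f Q = HH z Q)) \<and>
     \<comment> \<open>at Q_+: continuation along [0, Q_+) has the form g(s)/s with s^2 = Q - Q_+, g(0) \<noteq> 0\<close>
     (\<exists>S f r g s0. open S \<and> closed_segment 0 (Qplus z) - {Qplus z} \<subseteq> S \<and>
            f holomorphic_on S \<and> (\<forall>\<^sub>F Q in nhds 0. f Q = HH z Q) \<and>
            r > 0 \<and> g holomorphic_on ball 0 r \<and> g 0 \<noteq> 0 \<and>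
            s0 \<in> ball 0 r \<and> s0 \<noteq> 0 \<and> Qplus z + s0\<^sup>2 \<in> open_segment 0 (Qplus z) \<and>
            (\<forall>\<^sub>F s in at s0. f (Qplus z + s\<^sup>2) = g s / s))"
proof -
  obtain N where N: "open N" "1 \<in> N" "cfun holomorphic_on N" "\<forall>A\<in>N. Re (cfun A) > 1/2"
    by (rule ext1)
  obtain E W \<rho> where W: "open W" "0 \<in> W" "E holomorphic_on W" "0 < \<rho>" "\<rho> \<le> 1/4"
    "\<forall>\<sigma>\<in>W. norm (E \<sigma>) < \<rho>" "\<forall>\<sigma>\<in>W. 4*(1/2 + E \<sigma>)^3 - 3*(1/2 + E \<sigma>) = -1 + \<sigma>\<^sup>2"
    "inj_on E W" "E 0 = 0" "deriv E 0 \<noteq> 0"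
    by (rule ext2)
  obtain \<epsilon> where \<epsilon>: "\<epsilon> > 0" "\<And>z. dist z (1/2) < \<epsilon> \<Longrightarrow> Re (z\<^sup>2 - z + 1) > 0 \<and> \<bar>Re (AA z 0)\<bar> < 1"
    by (rule eps_lemma) blast
  have main: "(\<exists>S f. open S \<and> closed_segment 0 (Qminus z) \<subseteq> S \<and> f holomorphic_on S \<and>
            (\<forall>\<^sub>F Q in nhds 0. f Q = HH z Q)) \<and>
     (\<exists>S f r g s0. open S \<and> closed_segment 0 (Qplus z) - {Qplus z} \<subseteq> S \<and>
            f holomorphic_on S \<and> (\<forall>\<^sub>F Q in nhds 0. f Q = HH z Q) \<and>
            r > 0 \<and> g holomorphic_on ball 0 r \<and> g 0 \<noteq> 0 \<and>
            s0 \<in> ball 0 r \<and> s0 \<noteq> 0 \<and> Qplus z + s0\<^sup>2 \<in> open_segment 0 (Qplus z) \<and>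
            (\<forall>\<^sub>F s in at s0. f (Qplus z + s\<^sup>2) = g s / s))"
    if zd: "dist z (1/2) < \<epsilon>" for z
  proof -
    have z: "Re (z\<^sup>2 - z + 1) > 0" and a0: "\<bar>Re (AA z 0)\<bar> < 1" using \<epsilon>(2)[OF zd] by auto
    define S where "S = {Q. AA z Q \<in> D1 \<union> N}"
    have oS: "open S" unfolding S_def by (rule open_pre) (intro open_Un open_D1 N(1))
    have hol: "HH z holomorphic_on S" unfolding S_def by (rule HH_hol[OF z N(1) N(3) N(4)])
    have ev: "\<forall>\<^sub>F Q in nhds 0. HH z Q = HH z Q" by simp
    have segm: "closed_segment 0 (Qminus z) \<subseteq> S"
    proof
      fix x assume x: "x \<in> closed_segment 0 (Qminus z)"
      show "x \<in> S"
      proof (cases "x = Qminus z")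
        case True then show ?thesis using AA_Qminus[OF z] N(2) by (simp add: S_def)
      next
        case False
        have "AA z x \<in> D1" using seg_pre[OF a0 _ x False] AA_Qminus[OF z] by simp
        then show ?thesis by (simp add: S_def)
      qed
    qed
    have segp: "closed_segment 0 (Qplus z) - {Qplus z} \<subseteq> S"
    proof
      fix x assume x: "x \<in> closed_segment 0 (Qplus z) - {Qplus z}"
      then have "AA z x \<in> D1" using seg_pre[OF a0, of "Qplus z" x] AA_Qplus[OF z] by simp
      then show "x \<in> S" by (simp add: S_def)
    qed
    obtain r g s0 where rg: "r > 0" "g holomorphic_on ball 0 r" "g 0 \<noteq> 0"
      "s0 \<in> ball 0 r" "s0 \<noteq> 0" "Qplus z + s0\<^sup>2 \<in> open_segment 0 (Qplus z)"
      "\<forall>\<^sub>F s in at s0. HH z (Qplus z + s\<^sup>2) = g s / s"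
      using qplus_part[OF z a0 W] by blast
    have P1: "\<exists>S f. open S \<and> closed_segment 0 (Qminus z) \<subseteq> S \<and> f holomorphic_on S \<and>
            (\<forall>\<^sub>F Q in nhds 0. f Q = HH z Q)"
      by (rule exI[of _ S], rule exI[of _ "HH z"]) (use oS segm hol ev in simp)
    have P2: "\<exists>S f r g s0. open S \<and> closed_segment 0 (Qplus z) - {Qplus z} \<subseteq> S \<and>
            f holomorphic_on S \<and> (\<forall>\<^sub>F Q in nhds 0. f Q = HH z Q) \<and>
            r > 0 \<and> g holomorphic_on ball 0 r \<and> g 0 \<noteq> 0 \<and>
            s0 \<in> ball 0 r \<and> s0 \<noteq> 0 \<and> Qplus z + s0\<^sup>2 \<in> open_segment 0 (Qplus z) \<and>
            (\<forall>\<^sub>F s in at s0. f (Qplus z + s\<^sup>2) = g s / s)"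
      by (rule exI[of _ S], rule exI[of _ "HH z"], rule exI[of _ r], rule exI[of _ g], rule exI[of _ s0])
        (use oS segp hol ev rg in simp)
    show ?thesis using P1 P2 by (rule conjI)
  qed
  show ?thesis using \<epsilon>(1) main by blast
qed


end
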